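(* Let $K=\mathbb{F}_3$ and $S$ a smooth cubic surface over $K$. Suppose $S$ contains a skew pair of $K$-lines $\ell_1,\ell_2$ such that neither $\ell_1$ nor $\ell_2$ contains a $K$-rational Eckardt point. Then $\mathrm{Span}(\ell_1(K)\cup\ell_2(K))=S(K)$.
   Context: A smooth cubic surface $S$ over $K$ is a nonsingular surface in $\mathbb{P}^3$ defined by a homogeneous cubic over $K$. A $K$-line is a line in $\mathbb{P}^3$ defined over $K$; lines "on $S$" are lines over $\overline{K}$ contained in $S$. A skew pair of lines is a pair of disjoint lines. An Eckardt point is a point of $S$ through which three of the lines on $S$ pass. For a line $\ell\not\subset S$, $\ell\cdot S=P+Q+R$ with multiplicity. For $B\subseteq S(K)$ define $B_0=B$ and $B_{n+1}$ as the set of $R\in S(K)$ such that either $R\in B_n$ or there exist $P,Q\in B_n$ and a $K$-line $\ell\not\subset S$ with $\ell\cdot S=P+Q+R$; $\mathrm{Span}(B)=\bigcup_n B_n$. *)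

theory Defs
  imports "HOL-Algebra.Algebraic_Closure_Type" "HOL-Library.Numeral_Type"
begin

text \<open>Homogeneous coordinates on P^3 are indexed by the 4-element type 4.
A homogeneous cubic form in 4 variables is given by its coefficient function
on exponent vectors; only exponent vectors of total degree 3 are used.\<close>

definition mons3 :: "(4 \<Rightarrow> nat) set" where
  "mons3 = {e. (\<Sum>i\<in>UNIV. e i) = 3}"

definition evalF :: "((4 \<Rightarrow> nat) \<Rightarrow> 'a::comm_ring_1) \<Rightarrow> (4 \<Rightarrow> 'a) \<Rightarrow> 'a" where
  "evalF c x = (\<Sum>e\<in>mons3. c e * (\<Prod>i\<in>UNIV. x i ^ e i))"

definition pdF :: "((4 \<Rightarrow> nat) \<Rightarrow> 'a::comm_ring_1) \<Rightarrow> 4 \<Rightarrow> (4 \<Rightarrow> 'a) \<Rightarrow> 'a" where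
  "pdF c j x = (\<Sum>e\<in>mons3. c e * of_nat (e j) * x j ^ (e j - 1)
                   * (\<Prod>i\<in>UNIV - {j}. x i ^ e i))"

definition ext_coeffs :: "((4 \<Rightarrow> nat) \<Rightarrow> 'k::field) \<Rightarrow> (4 \<Rightarrow> nat) \<Rightarrow> 'k alg_closure" where
  "ext_coeffs c = (\<lambda>e. to_ac (c e))"

definition ext_vec :: "(4 \<Rightarrow> 'k::field) \<Rightarrow> 4 \<Rightarrow> 'k alg_closure" where
  "ext_vec x = (\<lambda>i. to_ac (x i))"

definition smooth_cubic :: "((4 \<Rightarrow> nat) \<Rightarrow> 'k::field) \<Rightarrow> bool" where
  "smooth_cubic c \<longleftrightarrow>
     (\<forall>x :: 4 \<Rightarrow> 'k alg_closure. x \<noteq> (\<lambda>_. 0) \<and> evalF (ext_coeffs c) x = 0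
        \<longrightarrow> (\<exists>j. pdF (ext_coeffs c) j x \<noteq> 0))"

definition ppt :: "(4 \<Rightarrow> 'a::field) \<Rightarrow> (4 \<Rightarrow> 'a) set" where
  "ppt x = {(\<lambda>i. a * x i) | a. a \<noteq> 0}"

definition surf_pts :: "((4 \<Rightarrow> nat) \<Rightarrow> 'a::field) \<Rightarrow> (4 \<Rightarrow> 'a) set set" where
  "surf_pts c = {ppt x | x. x \<noteq> (\<lambda>_. 0) \<and> evalF c x = 0}"

definition lincomb :: "'a::field \<Rightarrow> (4 \<Rightarrow> 'a) \<Rightarrow> 'a \<Rightarrow> (4 \<Rightarrow> 'a) \<Rightarrow> 4 \<Rightarrow> 'a" where
  "lincomb s u t v = (\<lambda>i. s * u i + t * v i)"

definition indep2 :: "(4 \<Rightarrow> 'a::field) \<Rightarrow> (4 \<Rightarrow> 'a) \<Rightarrow> bool" where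
  "indep2 u v \<longleftrightarrow> (\<forall>s t. lincomb s u t v = (\<lambda>_. 0) \<longrightarrow> s = 0 \<and> t = 0)"

definition line_pts :: "(4 \<Rightarrow> 'a::field) \<Rightarrow> (4 \<Rightarrow> 'a) \<Rightarrow> (4 \<Rightarrow> 'a) set set" where
  "line_pts u v = {ppt (lincomb s u t v) | s t. (s, t) \<noteq> (0, 0)}"

definition is_line :: "(4 \<Rightarrow> 'a::field) set set \<Rightarrow> bool" where
  "is_line L \<longleftrightarrow> (\<exists>u v. indep2 u v \<and> L = line_pts u v)"

definition line_on_surface :: "((4 \<Rightarrow> nat) \<Rightarrow> 'a::field) \<Rightarrow> (4 \<Rightarrow> 'a) set set \<Rightarrow> bool" where
  "line_on_surface c L \<longleftrightarrow> is_line L \<and> L \<subseteq> surf_pts c"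

definition eckardt :: "((4 \<Rightarrow> nat) \<Rightarrow> 'a::field) \<Rightarrow> (4 \<Rightarrow> 'a) set \<Rightarrow> bool" where
  "eckardt c P \<longleftrightarrow> P \<in> surf_pts c \<and>
     (\<exists>L1 L2 L3. L1 \<noteq> L2 \<and> L1 \<noteq> L3 \<and> L2 \<noteq> L3 \<and>
        line_on_surface c L1 \<and> line_on_surface c L2 \<and> line_on_surface c L3 \<and>
        P \<in> L1 \<and> P \<in> L2 \<and> P \<in> L3)"

definition Kline_on_surface :: "((4 \<Rightarrow> nat) \<Rightarrow> 'k::field) \<Rightarrow> (4 \<Rightarrow> 'k) \<Rightarrow> (4 \<Rightarrow> 'k) \<Rightarrow> bool" where
  "Kline_on_surface c u v \<longleftrightarrow> indep2 u v \<and>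
     line_pts (ext_vec u) (ext_vec v) \<subseteq> surf_pts (ext_coeffs c)"

definition Kline_has_K_eckardt :: "((4 \<Rightarrow> nat) \<Rightarrow> 'k::field) \<Rightarrow> (4 \<Rightarrow> 'k) \<Rightarrow> (4 \<Rightarrow> 'k) \<Rightarrow> bool" where
  "Kline_has_K_eckardt c u v \<longleftrightarrow>
     (\<exists>p. ppt p \<in> line_pts u v \<and> eckardt (ext_coeffs c) (ppt (ext_vec p)))"

text \<open>There is a K-line l, not contained in S, with l.S = P + Q + R (with multiplicity):
writing l = span(u,v) and the points as P = [a1 u + b1 v] etc., the restriction of the
cubic to l, as a binary cubic form, is a nonzero constant times the product of the three
linear forms vanishing at P, Q, R.\<close>
definition third_pt :: "((4 \<Rightarrow> nat) \<Rightarrow> 'k::field) \<Rightarrow> (4 \<Rightarrow> 'k) set \<Rightarrow> (4 \<Rightarrow> 'k) set \<Rightarrow> (4 \<Rightarrow> 'k) set \<Rightarrow> bool" where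
  "third_pt c P Q R \<longleftrightarrow>
     (\<exists>u v a1 b1 a2 b2 a3 b3 lam.
        indep2 u v \<and>
        \<not> (line_pts (ext_vec u) (ext_vec v) \<subseteq> surf_pts (ext_coeffs c)) \<and>
        (a1, b1) \<noteq> (0, 0) \<and> (a2, b2) \<noteq> (0, 0) \<and> (a3, b3) \<noteq> (0, 0) \<and>
        P = ppt (lincomb a1 u b1 v) \<and> Q = ppt (lincomb a2 u b2 v) \<and> R = ppt (lincomb a3 u b3 v) \<and>
        lam \<noteq> 0 \<and>
        (\<forall>s t :: 'k alg_closure.
           evalF (ext_coeffs c) (lincomb s (ext_vec u) t (ext_vec v)) =
             to_ac lam * (to_ac b1 * s - to_ac a1 * t) * (to_ac b2 * s - to_ac a2 * t)
               * (to_ac b3 * s - to_ac a3 * t)))"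

text \<open>Span(B) as the union of the B_n: the least set containing B and closed under
adding third points R in S(K) of K-lines through two of its points.\<close>
inductive_set spanS :: "((4 \<Rightarrow> nat) \<Rightarrow> 'k::field) \<Rightarrow> (4 \<Rightarrow> 'k) set set \<Rightarrow> (4 \<Rightarrow> 'k) set set"
  for c B where
  base: "R \<in> B \<Longrightarrow> R \<in> spanS c B"
| step: "P \<in> spanS c B \<Longrightarrow> Q \<in> spanS c B \<Longrightarrow> R \<in> surf_pts c \<Longrightarrow> third_pt c P Q R
          \<Longrightarrow> R \<in> spanS c B"

end

theory Submission
  imports Defs "HOL-Library.Cardinality"
begin


definition bP :: "((4\<Rightarrow>nat) \<Rightarrow> 'a::field) \<Rightarrow> (4\<Rightarrow>'a) \<Rightarrow> (4\<Rightarrow>'a) \<Rightarrow> 'a poly" where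
  "bP c xv yv = (\<Sum>e\<in>mons3. [:c e:] * (\<Prod>i\<in>UNIV. [:yv i, xv i:] ^ e i))"

lemma poly_bP: "poly (bP c xv yv) s = evalF c (\<lambda>i. s * xv i + yv i)"
  by (simp add: bP_def evalF_def poly_sum poly_prod algebra_simps)

lemma homog: "evalF c (\<lambda>i. a * x i) = a^3 * evalF c x"
proof -
  have "(\<Prod>i\<in>UNIV. (a * x i) ^ e i) = a^3 * (\<Prod>i\<in>UNIV. x i ^ e i)" if "e \<in> mons3" for e
    using that by (simp add: power_mult_distrib prod.distrib power_sum[symmetric] mons3_def)
  then show ?thesis unfolding evalF_def by (simp add: sum_distrib_left algebra_simps)
qed

lemma coeff_mult_top:
  assumes "degree p \<le> m" "degree q \<le> n"
  shows "coeff (p * q) (m + n) = coeff p m * coeff q n"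
proof -
  have "\<forall>i\<in>{..m+n}. coeff p i * coeff q (m+n-i) = (if i = m then coeff p m * coeff q n else 0)"
  proof
    fix i assume "i \<in> {..m+n}"
    show "coeff p i * coeff q (m+n-i) = (if i = m then coeff p m * coeff q n else 0)"
    proof (cases "i < m")
      case True then have "coeff q (m+n-i) = 0" using assms by (intro coeff_eq_0) auto
      then show ?thesis using True by auto
    next
      case False
      show ?thesis
      proof (cases "i = m")
        case False
        then have "coeff p i = 0" using assms \<open>\<not> i < m\<close> by (intro coeff_eq_0) auto
        then show ?thesis using False by auto
      qed auto
    qed
  qed
  then show ?thesis by (simp add: coeff_mult)
qed

lemma coeff_prod_top:
  "finite A \<Longrightarrow> (\<forall>i\<in>A. degree (f i) \<le> d i) \<Longrightarrow> coeff (prod f A) (sum d A) = (\<Prod>i\<in>A. coeff (f i) (d i))"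
proof (induction A rule: finite_induct)
  case (insert a A)
  have "degree (prod f A) \<le> sum d A"
  proof -
    have "degree (prod f A) \<le> sum (degree \<circ> f) A" by (rule degree_prod_sum_le[OF insert(1)])
    also have "\<dots> \<le> sum d A" using insert(4) by (intro sum_mono) auto
    finally show ?thesis .
  qed
  then show ?case using insert by (simp add: coeff_mult_top)
qed simp

lemma degree_lin_pow: "degree ([:b, a:] ^ k) \<le> k"
  using degree_power_le[of "[:b,a:]" k] by (simp add: order_trans)

lemma coeff_lin_pow: "coeff ([:b, a:] ^ k) k = a ^ k"
proof (induction k)
  case (Suc k)
  have "coeff ([:b, a:] * [:b, a:] ^ k) (1 + k) = coeff [:b,a:] 1 * coeff ([:b, a:] ^ k) k"
    by (rule coeff_mult_top) (auto simp: degree_lin_pow)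
  then show ?case using Suc by simp
qed simp

lemma degree_bP: "degree (bP c xv yv) \<le> 3"
proof (rule degree_le, intro allI impI)
  fix n :: nat assume n: "n > 3"
  have "coeff (\<Prod>i\<in>UNIV. [:yv i, xv i:] ^ e i) n = 0" if "e \<in> mons3" for e
  proof (rule coeff_eq_0)
    have "degree (\<Prod>i\<in>UNIV. [:yv i, xv i:] ^ e i) \<le> (\<Sum>i\<in>UNIV. degree ([:yv i, xv i:] ^ e i))"
      using degree_prod_sum_le[of UNIV "\<lambda>i. [:yv i, xv i:] ^ e i"] by (simp add: o_def)
    also have "\<dots> \<le> (\<Sum>i\<in>UNIV. e i)" by (intro sum_mono degree_lin_pow)
    finally show "degree (\<Prod>i\<in>UNIV. [:yv i, xv i:] ^ e i) < n" using that n by (simp add: mons3_def)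
  qed
  then show "coeff (bP c xv yv) n = 0" by (simp add: bP_def coeff_sum)
qed

lemma coeff_bP_3: "coeff (bP c xv yv) 3 = evalF c xv"
proof -
  have "coeff (\<Prod>i\<in>UNIV. [:yv i, xv i:] ^ e i) 3 = (\<Prod>i\<in>UNIV. xv i ^ e i)" if "e \<in> mons3" for e
  proof -
    have "coeff (\<Prod>i\<in>UNIV. [:yv i, xv i:] ^ e i) (\<Sum>i\<in>UNIV. e i) = (\<Prod>i\<in>UNIV. coeff ([:yv i, xv i:] ^ e i) (e i))"
      by (rule coeff_prod_top) (auto simp: degree_lin_pow)
    then show ?thesis using that by (simp add: mons3_def coeff_lin_pow)
  qed
  then show ?thesis by (simp add: bP_def coeff_sum evalF_def)
qed

lemma binform:
  "evalF c (lincomb s xv t yv) = coeff (bP c xv yv) 3 * s^3 + coeff (bP c xv yv) 2 * s^2 * t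
     + coeff (bP c xv yv) 1 * s * t^2 + coeff (bP c xv yv) 0 * t^3"
proof (cases "t = 0")
  case True
  then have "lincomb s xv t yv = (\<lambda>i. s * xv i)" by (simp add: lincomb_def)
  then show ?thesis using True by (simp add: homog coeff_bP_3)
next
  case False
  let ?P = "bP c xv yv"
  have "lincomb s xv t yv = (\<lambda>i. t * ((s/t) * xv i + yv i))" using False
    by (simp add: lincomb_def distrib_left)
  then have "evalF c (lincomb s xv t yv) = t^3 * poly ?P (s/t)" by (simp add: homog poly_bP)
  also have "poly ?P (s/t) = (\<Sum>i\<le>3. coeff ?P i * (s/t)^i)"
    using poly_as_sum_of_monoms'[OF degree_bP, of c xv yv]
    by (metis (no_types, lifting) poly_monom poly_sum sum.cong)
  also have "\<dots> = coeff ?P 0 + coeff ?P 1 * (s/t) + coeff ?P 2 * (s/t)^2 + coeff ?P 3 * (s/t)^3"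
    by (simp add: eval_nat_numeral atMost_Suc)
  finally have eq: "evalF c (lincomb s xv t yv) = t^3 * (coeff ?P 0 + coeff ?P 1 * (s/t) + coeff ?P 2 * (s/t)^2 + coeff ?P 3 * (s/t)^3)" .
  have "t^3 * (coeff ?P 0 + coeff ?P 1 * (s/t) + coeff ?P 2 * (s/t)^2 + coeff ?P 3 * (s/t)^3)
     = coeff ?P 3 * s^3 + coeff ?P 2 * s^2 * t + coeff ?P 1 * s * t^2 + coeff ?P 0 * t^3"
    using False by (simp add: field_simps power2_eq_square power3_eq_cube)
  then show ?thesis using eq by simp
qed



lemma pderiv_sum': "pderiv (\<Sum>x\<in>A. f x) = (\<Sum>x\<in>A. pderiv (f x))"
  by (induction A rule: infinite_finite_induct) (auto simp: pderiv_add)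

lemma coeff1_bP: "coeff (bP c zv rv) 1 = (\<Sum>j\<in>UNIV. zv j * pdF c j rv)"
proof -
  have c1: "coeff p 1 = poly (pderiv p) 0" for p :: "'a poly"
    by (simp add: poly_0_coeff_0 coeff_pderiv)
  have pd1: "pderiv ([:a:] * q) = [:a:] * pderiv q" for a and q :: "'a poly"
    by (simp add: pderiv_mult pderiv_pCons pderiv_smult)
  have pdlin: "pderiv [:b, a:] = [:a:]" for a b :: 'a
    by (simp add: pderiv_pCons)
  have inner: "poly (pderiv (\<Prod>i\<in>UNIV. [:rv i, zv i:] ^ e i)) 0
     = (\<Sum>j\<in>UNIV. zv j * (of_nat (e j) * rv j ^ (e j - 1) * (\<Prod>i\<in>UNIV - {j}. rv i ^ e i)))" for e
    by (simp add: pderiv_prod poly_sum poly_prod pderiv_power pdlin mult_ac)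
  have "coeff (bP c zv rv) 1 = (\<Sum>e\<in>mons3. c e * poly (pderiv (\<Prod>i\<in>UNIV. [:rv i, zv i:] ^ e i)) 0)"
    by (simp add: bP_def coeff_sum poly_0_coeff_0 coeff_pderiv)
  also have "\<dots> = (\<Sum>e\<in>mons3. \<Sum>j\<in>UNIV. zv j * (c e * of_nat (e j) * rv j ^ (e j - 1) * (\<Prod>i\<in>UNIV - {j}. rv i ^ e i)))"
    by (simp add: inner sum_distrib_left mult_ac)
  also have "\<dots> = (\<Sum>j\<in>UNIV. zv j * pdF c j rv)"
    by (subst sum.swap) (simp add: pdF_def sum_distrib_left)
  finally show ?thesis .
qed





lemma evalF_ext: "evalF (ext_coeffs c) (ext_vec x) = to_ac (evalF c x)"
  by (simp add: evalF_def ext_coeffs_def ext_vec_def to_ac_sum to_ac_prod)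

lemma pdF_ext: "pdF (ext_coeffs c) j (ext_vec x) = to_ac (pdF c j x)"
  by (simp add: pdF_def ext_coeffs_def ext_vec_def to_ac_sum to_ac_prod)

lemma ext_lincomb: "ext_vec (lincomb s u t v) = lincomb (to_ac s) (ext_vec u) (to_ac t) (ext_vec v)"
  by (simp add: ext_vec_def lincomb_def)

lemma ext_vec_0_iff: "ext_vec x = (\<lambda>_. 0) \<longleftrightarrow> x = (\<lambda>_. 0)"
  by (auto simp: ext_vec_def fun_eq_iff)

lemma evalF_zero: "evalF c (\<lambda>_. 0) = 0"
  using homog[of c 0 "\<lambda>_. 0"] by simp

lemma ppt_self: "x \<in> ppt x"
  unfolding ppt_def by (rule CollectI, rule exI[of _ 1]) simp

lemma ppt_eqD: "ppt x = ppt y \<Longrightarrow> \<exists>a. a \<noteq> 0 \<and> x = (\<lambda>i. a * y i)"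
  using ppt_self[of x] unfolding ppt_def by auto

lemma ppt_surf: "ppt z \<in> surf_pts c \<Longrightarrow> evalF c z = 0"
proof -
  assume "ppt z \<in> surf_pts c"
  then obtain x where "ppt z = ppt x" "evalF c x = 0" unfolding surf_pts_def by auto
  then obtain a where "z = (\<lambda>i. a * x i)" using ppt_eqD by blast
  then show ?thesis using \<open>evalF c x = 0\<close> by (simp add: homog)
qed

lemma surfI: "z \<noteq> (\<lambda>_. 0) \<Longrightarrow> evalF c z = 0 \<Longrightarrow> ppt z \<in> surf_pts c"
  unfolding surf_pts_def by auto

lemma four_pt:
  fixes a3 a2 a1 a0 b3 b2 b1 b0 :: "'a::field"
  assumes "(2::'a) \<noteq> 0" "a3 = b3" "a0 = b0" "a3 + a2 + a1 + a0 = b3 + b2 + b1 + b0"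
    "a3 - a2 + a1 - a0 = b3 - b2 + b1 - b0"
  shows "a2 = b2 \<and> a1 = b1"
proof -
  have h1: "a1 + a2 = b1 + b2" and h2: "a1 + b2 = a2 + b1" using assms(2-5) by (simp_all add: algebra_simps)
  have "(a1 + a2) + (a1 + b2) = (b1 + b2) + (a2 + b1)" using h1 h2 by simp
  then have "2 * a1 = 2 * b1" by (simp add: mult_2 algebra_simps)
  then have "a1 = b1" using assms(1) by simp
  then show ?thesis using assms by simp
qed

abbreviation cf :: "((4\<Rightarrow>nat) \<Rightarrow> 'a::field) \<Rightarrow> (4\<Rightarrow>'a) \<Rightarrow> (4\<Rightarrow>'a) \<Rightarrow> nat \<Rightarrow> 'a" where
  "cf c x y k \<equiv> coeff (bP c x y) k"

lemma cf_vals: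
  "cf c x y 3 = evalF c (lincomb 1 x 0 y)"
  "cf c x y 0 = evalF c (lincomb 0 x 1 y)"
  "cf c x y 3 + cf c x y 2 + cf c x y 1 + cf c x y 0 = evalF c (lincomb 1 x 1 y)"
  "cf c x y 3 - cf c x y 2 + cf c x y 1 - cf c x y 0 = evalF c (lincomb 1 x (-1) y)"
  by (simp_all add: binform)

lemma binL:
  fixes c :: "(4\<Rightarrow>nat) \<Rightarrow> 'k::field"
  assumes two: "(2::'k) \<noteq> 0"
  shows "evalF (ext_coeffs c) (lincomb s (ext_vec x) t (ext_vec y)) =
    to_ac (cf c x y 3) * s^3 + to_ac (cf c x y 2) * s^2 * t + to_ac (cf c x y 1) * s * t^2 + to_ac (cf c x y 0) * t^3"
proof -
  let ?C = "ext_coeffs c" and ?X = "ext_vec x" and ?Y = "ext_vec y"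
  have ev: "evalF ?C (lincomb (to_ac a) ?X (to_ac b) ?Y) = to_ac (evalF c (lincomb a x b y))" for a b
    by (simp add: ext_lincomb[symmetric] evalF_ext)
  have two': "(2::'k alg_closure) \<noteq> 0" using two by (metis to_ac_eq_0_iff to_ac_numeral)
  have e3: "cf ?C ?X ?Y 3 = to_ac (cf c x y 3)"
    using cf_vals(1)[of ?C ?X ?Y] ev[of 1 0] cf_vals(1)[of c x y] by simp
  have e0: "cf ?C ?X ?Y 0 = to_ac (cf c x y 0)"
    using cf_vals(2)[of ?C ?X ?Y] ev[of 0 1] cf_vals(2)[of c x y] by simp
  have e11: "cf ?C ?X ?Y 3 + cf ?C ?X ?Y 2 + cf ?C ?X ?Y 1 + cf ?C ?X ?Y 0 =
      to_ac (cf c x y 3) + to_ac (cf c x y 2) + to_ac (cf c x y 1) + to_ac (cf c x y 0)"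
    using cf_vals(3)[of ?C ?X ?Y] ev[of 1 1] cf_vals(3)[of c x y, symmetric] by simp
  have e12: "cf ?C ?X ?Y 3 - cf ?C ?X ?Y 2 + cf ?C ?X ?Y 1 - cf ?C ?X ?Y 0 =
      to_ac (cf c x y 3) - to_ac (cf c x y 2) + to_ac (cf c x y 1) - to_ac (cf c x y 0)"
    using cf_vals(4)[of ?C ?X ?Y] ev[of 1 "-1"] cf_vals(4)[of c x y, symmetric] by simp
  have "cf ?C ?X ?Y 2 = to_ac (cf c x y 2) \<and> cf ?C ?X ?Y 1 = to_ac (cf c x y 1)"
    by (rule four_pt[OF two' e3 e0 e11 e12])
  then show ?thesis using e3 e0 by (simp add: binform)
qed

lemma three_elems:
  assumes "CARD('k::{field,finite}) = 3"
  shows "(1::'k) + 1 = -1" and "\<And>x::'k. x = 0 \<or> x = 1 \<or> x = -1"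
proof -
  have m1: "(-1::'k) \<noteq> 1"
  proof
    assume h: "(-1::'k) = 1"
    have "\<not> UNIV \<subseteq> {0, 1::'k}"
    proof
      assume "UNIV \<subseteq> {0, 1::'k}"
      then have "CARD('k) \<le> card {0, 1::'k}" by (intro card_mono) auto
      then show False using assms by (simp add: card_insert_if)
    qed
    then obtain a :: 'k where a: "a \<noteq> 0" "a \<noteq> 1" by auto
    have "a + 1 \<noteq> 0" using a h by (metis add.commute add_eq_0_iff)
    moreover have "a + 1 \<noteq> 1" using a by simp
    moreover have "a + 1 \<noteq> a" by simp
    ultimately have "card {0, 1, a, a + 1} = 4" using a by (simp add: card_insert_if)
    moreover have "card {0, 1, a, a + 1} \<le> CARD('k)" by (intro card_mono) auto
    ultimately show False using assms by simp
  qed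
  have U: "UNIV = {0, 1, -1::'k}"
  proof (rule card_subset_eq[symmetric])
    show "card {0, 1, -1::'k} = card (UNIV::'k set)" using m1 assms by (simp add: card_insert_if)
  qed auto
  show "\<And>x::'k. x = 0 \<or> x = 1 \<or> x = -1" using U by auto
  have "(1::'k) + 1 \<noteq> 0" using m1 by (metis add_eq_0_iff)
  moreover have "(1::'k) + 1 \<noteq> 1"
  proof
    assume "(1::'k) + 1 = 1"
    then have "(1::'k) = 0" by (metis add_cancel_right_right)
    then show False by simp
  qed
  ultimately show "(1::'k) + 1 = -1" using U by auto
qed




lemma ext_indep2:
  assumes "indep2 u v"
  shows "indep2 (ext_vec u) (ext_vec v)"
  unfolding indep2_def
proof (intro allI impI)
  fix s t :: "'a alg_closure"
  assume h: "lincomb s (ext_vec u) t (ext_vec v) = (\<lambda>_. 0)"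
  have hi: "s * to_ac (u i) + t * to_ac (v i) = 0" for i
    using fun_cong[OF h, of i] by (simp add: lincomb_def ext_vec_def)
  have "v \<noteq> (\<lambda>_. 0)"
  proof
    assume "v = (\<lambda>_. 0)"
    then have "lincomb 0 u 1 v = (\<lambda>_. 0)" by (simp add: lincomb_def)
    then show False using assms[unfolded indep2_def, rule_format, of 0 1] by simp
  qed
  then obtain j where vj: "v j \<noteq> 0" by auto
  show "s = 0 \<and> t = 0"
  proof (cases "s = 0")
    case True
    then have "t * to_ac (v j) = 0" using hi[of j] by simp
    then show ?thesis using True vj by simp
  next
    case False
    have key: "to_ac (u i) = (-t/s) * to_ac (v i)" for i
    proof -
      have "s * to_ac (u i) = - (t * to_ac (v i))" using hi[of i] by (simp add: eq_neg_iff_add_eq_0)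
      then have "to_ac (u i) = - (t * to_ac (v i)) / s" using False by (metis nonzero_mult_div_cancel_left)
      then show ?thesis by simp
    qed
    have r: "-t/s = to_ac (u j / v j)"
    proof -
      have "to_ac (v j) \<noteq> 0" using vj by simp
      then show ?thesis using key[of j] by (metis nonzero_mult_div_cancel_right to_ac_divide)
    qed
    define r where "r = u j / v j"
    have uv: "u i = r * v i" for i
    proof -
      have "to_ac (u i) = to_ac ((u j / v j) * v i)" using key[of i] unfolding r by (simp only: to_ac_mult)
      then show ?thesis unfolding r_def by (simp only: to_ac_eq_iff)
    qed
    have "lincomb 1 u (- r) v = (\<lambda>_. 0)" unfolding lincomb_def by (rule ext) (simp add: uv)
    then show ?thesis using assms[unfolded indep2_def, rule_format, of 1 "- r"] by simp
  qed
qed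

lemma line_ptsI: "(s,t) \<noteq> (0,0) \<Longrightarrow> ppt (lincomb s u t v) \<in> line_pts u v"
  unfolding line_pts_def by blast

lemma Kline_F:
  assumes "Kline_on_surface c u v"
  shows "evalF c (lincomb s u t v) = 0"
proof (cases "(s, t) = (0, 0)")
  case True
  then show ?thesis by (simp add: lincomb_def evalF_zero)
next
  case False
  have "ppt (lincomb (to_ac s) (ext_vec u) (to_ac t) (ext_vec v)) \<in> line_pts (ext_vec u) (ext_vec v)"
    using False by (intro line_ptsI) auto
  then have "ppt (lincomb (to_ac s) (ext_vec u) (to_ac t) (ext_vec v)) \<in> surf_pts (ext_coeffs c)"
    using assms unfolding Kline_on_surface_def by auto
  then have "evalF (ext_coeffs c) (lincomb (to_ac s) (ext_vec u) (to_ac t) (ext_vec v)) = 0"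
    by (rule ppt_surf)
  then show ?thesis by (simp add: ext_lincomb[symmetric] evalF_ext)
qed

lemma allzero:
  fixes c :: "(4\<Rightarrow>nat) \<Rightarrow> 'k::field"
  assumes "(2::'k) \<noteq> 0" "\<forall>s t. evalF c (lincomb s x t y) = 0"
  shows "cf c x y 3 = 0 \<and> cf c x y 2 = 0 \<and> cf c x y 1 = 0 \<and> cf c x y 0 = 0"
proof -
  have a: "cf c x y 3 = 0" "cf c x y 0 = 0" "cf c x y 3 + cf c x y 2 + cf c x y 1 + cf c x y 0 = 0 + 0 + 0 + 0"
     "cf c x y 3 - cf c x y 2 + cf c x y 1 - cf c x y 0 = 0 - 0 + 0 - 0"
    using cf_vals[of c x y] assms(2) by simp_all
  show ?thesis using four_pt[OF assms(1) a] a by simp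
qed

lemma line_on_surfI:
  fixes c :: "(4\<Rightarrow>nat) \<Rightarrow> 'k::field"
  assumes two: "(2::'k) \<noteq> 0" and ind: "indep2 x y" and z: "\<forall>s t. evalF c (lincomb s x t y) = 0"
  shows "line_on_surface (ext_coeffs c) (line_pts (ext_vec x) (ext_vec y))"
  unfolding line_on_surface_def is_line_def
proof (intro conjI)
  show "\<exists>u v. indep2 u v \<and> line_pts (ext_vec x) (ext_vec y) = line_pts u v"
    using ext_indep2[OF ind] by blast
  have cz: "cf c x y 3 = 0 \<and> cf c x y 2 = 0 \<and> cf c x y 1 = 0 \<and> cf c x y 0 = 0"
    by (rule allzero[OF two z])
  show "line_pts (ext_vec x) (ext_vec y) \<subseteq> surf_pts (ext_coeffs c)"
  proof
    fix P assume "P \<in> line_pts (ext_vec x) (ext_vec y)"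
    then obtain s t where st: "(s, t) \<noteq> (0, 0)" "P = ppt (lincomb s (ext_vec x) t (ext_vec y))"
      unfolding line_pts_def by auto
    have "lincomb s (ext_vec x) t (ext_vec y) \<noteq> (\<lambda>_. 0)"
      using ext_indep2[OF ind] st(1) unfolding indep2_def by blast
    moreover have "evalF (ext_coeffs c) (lincomb s (ext_vec x) t (ext_vec y)) = 0"
      using binL[OF two] cz by simp
    ultimately show "P \<in> surf_pts (ext_coeffs c)" using st(2) by (simp add: surfI)
  qed
qed

definition comb4 :: "(4\<Rightarrow>'a::field) \<Rightarrow> (4\<Rightarrow>'a) \<Rightarrow> (4\<Rightarrow>'a) \<Rightarrow> (4\<Rightarrow>'a) \<Rightarrow> 'a \<Rightarrow> 'a \<Rightarrow> 'a \<Rightarrow> 'a \<Rightarrow> 4 \<Rightarrow> 'a" where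
  "comb4 u v w z a b c d = (\<lambda>i. a * u i + b * v i + c * w i + d * z i)"

lemma comb4_lincomb:
  "lincomb s (lincomb a u b w) t (lincomb a' w1 b' w2) = comb4 u w w1 w2 (s*a) (s*b) (t*a') (t*b')"
  by (simp add: lincomb_def comb4_def fun_eq_iff algebra_simps)

lemma ext_comb4: "ext_vec (comb4 u v w z a b c d) = comb4 (ext_vec u) (ext_vec v) (ext_vec w) (ext_vec z) (to_ac a) (to_ac b) (to_ac c) (to_ac d)"
  by (simp add: ext_vec_def comb4_def)

lemma comb4_diff: "comb4 u v w z a b c d = comb4 u v w z a' b' c' d' \<longleftrightarrow>
   comb4 u v w z (a - a') (b - b') (c - c') (d - d') = (\<lambda>_. 0)"
  by (auto simp: comb4_def fun_eq_iff algebra_simps)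




locale cs =
  fixes c :: "(4\<Rightarrow>nat) \<Rightarrow> 'k::{field,finite}" and u1 v1 u2 v2 :: "4 \<Rightarrow> 'k"
  assumes card: "CARD('k) = 3" and smooth: "smooth_cubic c"
    and l1: "Kline_on_surface c u1 v1" and l2: "Kline_on_surface c u2 v2"
    and skew: "line_pts (ext_vec u1) (ext_vec v1) \<inter> line_pts (ext_vec u2) (ext_vec v2) = {}"
    and ne1: "\<not> Kline_has_K_eckardt c u1 v1" and ne2: "\<not> Kline_has_K_eckardt c u2 v2"
begin

lemma oo: "(1::'k) + 1 = -1" using three_elems(1)[OF card] .
lemma kc: "x = 0 \<or> x = 1 \<or> x = (-1::'k)" using three_elems(2)[OF card] .
lemma two: "(2::'k) \<noteq> 0"
proof
  assume h: "(2::'k) = 0"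
  have "(1::'k) + 1 = 2" by simp
  then have "(-1::'k) = 0" using oo h by metis
  then show False by simp
qed

lemma ind1: "indep2 u1 v1" using l1 unfolding Kline_on_surface_def by simp
lemma ind2: "indep2 u2 v2" using l2 unfolding Kline_on_surface_def by simp

lemma indep4_cl:
  fixes a b c' d :: "'k alg_closure"
  assumes h: "comb4 (ext_vec u1) (ext_vec v1) (ext_vec u2) (ext_vec v2) a b c' d = (\<lambda>_. 0)"
  shows "a = 0 \<and> b = 0 \<and> c' = 0 \<and> d = 0"
proof -
  let ?W = "lincomb a (ext_vec u1) b (ext_vec v1)"
  have W2: "?W = lincomb (-c') (ext_vec u2) (-d) (ext_vec v2)"
  proof (rule ext)
    fix i
    have "a * ext_vec u1 i + b * ext_vec v1 i + c' * ext_vec u2 i + d * ext_vec v2 i = 0"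
      using fun_cong[OF h, of i] by (simp add: comb4_def)
    then have "(a * ext_vec u1 i + b * ext_vec v1 i) + (c' * ext_vec u2 i + d * ext_vec v2 i) = 0"
      by (simp add: add.assoc)
    then have "a * ext_vec u1 i + b * ext_vec v1 i = - (c' * ext_vec u2 i + d * ext_vec v2 i)"
      by (metis eq_neg_iff_add_eq_0)
    then show "?W i = lincomb (-c') (ext_vec u2) (-d) (ext_vec v2) i"
      unfolding lincomb_def by simp
  qed
  show ?thesis
  proof (cases "(a, b) = (0, 0)")
    case False
    have Wn: "?W \<noteq> (\<lambda>_. 0)" using ext_indep2[OF ind1] False unfolding indep2_def by blast
    have m1: "ppt ?W \<in> line_pts (ext_vec u1) (ext_vec v1)" using False by (rule line_ptsI)
    have "(-c', -d) \<noteq> (0, 0)"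
    proof
      assume "(-c', -d) = (0, 0)"
      then have "?W = (\<lambda>_. 0)" using W2 by (simp add: lincomb_def)
      then show False using Wn by simp
    qed
    then have "ppt ?W \<in> line_pts (ext_vec u2) (ext_vec v2)" unfolding W2 by (rule line_ptsI)
    then show ?thesis using m1 skew by blast
  next
    case True
    then have "lincomb (-c') (ext_vec u2) (-d) (ext_vec v2) = (\<lambda>_. 0)"
      using W2 by (simp add: lincomb_def fun_eq_iff)
    then have "-c' = 0 \<and> -d = 0" using ext_indep2[OF ind2] unfolding indep2_def by blast
    then show ?thesis using True by simp
  qed
qed

lemma indep4:
  assumes "comb4 u1 v1 u2 v2 a b c' d = (\<lambda>_. 0)"
  shows "a = 0 \<and> b = 0 \<and> c' = 0 \<and> d = 0"
proof -
  have "ext_vec (comb4 u1 v1 u2 v2 a b c' d) = (\<lambda>_. 0)" using assms by (simp add: ext_vec_def)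
  then have "comb4 (ext_vec u1) (ext_vec v1) (ext_vec u2) (ext_vec v2) (to_ac a) (to_ac b) (to_ac c') (to_ac d) = (\<lambda>_. 0)"
    by (simp add: ext_comb4)
  from indep4_cl[OF this] show ?thesis by simp
qed

lemma comb4_inj:
  assumes "comb4 u1 v1 u2 v2 a b c' d = comb4 u1 v1 u2 v2 a' b' c'' d'"
  shows "a = a' \<and> b = b' \<and> c' = c'' \<and> d = d'"
  using indep4[OF assms[unfolded comb4_diff]] by simp

lemma surj4: "\<exists>a b c' d. z = comb4 u1 v1 u2 v2 a b c' d"
proof -
  let ?f = "\<lambda>(a, b, c', d). comb4 u1 v1 u2 v2 a b c' d"
  have inj: "inj ?f"
  proof (rule injI)
    fix p q :: "'k \<times> 'k \<times> 'k \<times> 'k"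
    assume "?f p = ?f q"
    then show "p = q" using comb4_inj by (cases p; cases q) auto
  qed
  have "card (range ?f) = CARD('k \<times> 'k \<times> 'k \<times> 'k)" using inj by (simp add: card_image)
  also have "\<dots> = CARD(4 \<Rightarrow> 'k)" using card by (simp add: card_fun)
  finally have "range ?f = UNIV" by (intro card_subset_eq) auto
  then have "z \<in> range ?f" by simp
  then show ?thesis by auto
qed


lemma F_l1: "evalF c (lincomb s u1 t v1) = 0" by (rule Kline_F[OF l1])
lemma F_l2: "evalF c (lincomb s u2 t v2) = 0" by (rule Kline_F[OF l2])

lemma lc10: "lincomb 1 x 0 y = x" by (simp add: lincomb_def)
lemma lc01: "lincomb 0 x 1 y = y" by (simp add: lincomb_def)

lemma indep_xy:
  assumes ab: "(a,b) \<noteq> (0,0)" and ab': "(a',b') \<noteq> (0,0)"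
  shows "indep2 (lincomb a u1 b v1) (lincomb a' u2 b' v2)"
  unfolding indep2_def
proof (intro allI impI)
  fix s t assume "lincomb s (lincomb a u1 b v1) t (lincomb a' u2 b' v2) = (\<lambda>_. 0)"
  then have "comb4 u1 v1 u2 v2 (s*a) (s*b) (t*a') (t*b') = (\<lambda>_. 0)" by (simp add: comb4_lincomb)
  then have "s*a = 0 \<and> s*b = 0 \<and> t*a' = 0 \<and> t*b' = 0" by (rule indep4)
  then show "s = 0 \<and> t = 0" using ab ab' by auto
qed

lemma sum_nz:
  assumes ab: "(a,b) \<noteq> (0,0)" and ab': "(a',b') \<noteq> (0,0)"
  shows "lincomb 1 (lincomb a u1 b v1) 1 (lincomb a' u2 b' v2) \<noteq> (\<lambda>_. 0)"
  using indep_xy[OF ab ab', unfolded indep2_def, rule_format, of 1 1] by auto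

lemma third_ptI:
  assumes "indep2 u v" "\<not> (line_pts (ext_vec u) (ext_vec v) \<subseteq> surf_pts (ext_coeffs c))"
    "(a1, b1) \<noteq> (0, 0)" "(a2, b2) \<noteq> (0, 0)" "(a3, b3) \<noteq> (0, 0)" "lam \<noteq> 0"
    "\<forall>s t :: 'k alg_closure.
           evalF (ext_coeffs c) (lincomb s (ext_vec u) t (ext_vec v)) =
             to_ac lam * (to_ac b1 * s - to_ac a1 * t) * (to_ac b2 * s - to_ac a2 * t)
               * (to_ac b3 * s - to_ac a3 * t)"
  shows "third_pt c (ppt (lincomb a1 u b1 v)) (ppt (lincomb a2 u b2 v)) (ppt (lincomb a3 u b3 v))"
  unfolding third_pt_def
  apply (rule exI[of _ u], rule exI[of _ v], rule exI[of _ a1], rule exI[of _ b1], rule exI[of _ a2],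
     rule exI[of _ b2], rule exI[of _ a3], rule exI[of _ b3], rule exI[of _ lam])
  using assms by auto

lemma not_line_in:
  assumes "evalF c (lincomb s u t v) \<noteq> 0"
  shows "\<not> (line_pts (ext_vec u) (ext_vec v) \<subseteq> surf_pts (ext_coeffs c))"
proof
  assume sub: "line_pts (ext_vec u) (ext_vec v) \<subseteq> surf_pts (ext_coeffs c)"
  have "(s, t) \<noteq> (0, 0)" using assms by (auto simp: lincomb_def evalF_zero)
  then have "(to_ac s, to_ac t) \<noteq> (0, 0)" by simp
  then have "ppt (lincomb (to_ac s) (ext_vec u) (to_ac t) (ext_vec v)) \<in> surf_pts (ext_coeffs c)"
    using sub line_ptsI by blast
  then have "evalF (ext_coeffs c) (lincomb (to_ac s) (ext_vec u) (to_ac t) (ext_vec v)) = 0"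
    by (rule ppt_surf)
  then show False using assms by (simp add: ext_lincomb[symmetric] evalF_ext)
qed

lemma easy:
  assumes ab: "(a,b) \<noteq> (0,0)" and ab': "(a',b') \<noteq> (0,0)"
    and x: "x = lincomb a u1 b v1" and y: "y = lincomb a' u2 b' v2"
    and R0: "evalF c (lincomb 1 x 1 y) = 0" and ne: "cf c x y 2 \<noteq> 0"
  shows "ppt (lincomb 1 x 1 y) \<in> spanS c (line_pts u1 v1 \<union> line_pts u2 v2)"
proof -
  have c3: "cf c x y 3 = 0" using cf_vals(1)[of c x y] x F_l1 by (simp add: lc10)
  have c0: "cf c x y 0 = 0" using cf_vals(2)[of c x y] y F_l2 by (simp add: lc01)
  have c1: "cf c x y 1 = - cf c x y 2" using cf_vals(3)[of c x y] R0 c3 c0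
    by (simp add: eq_neg_iff_add_eq_0 add.commute)
  have ind: "indep2 x y" using indep_xy[OF ab ab'] x y by simp
  have Rnz: "lincomb 1 x 1 y \<noteq> (\<lambda>_. 0)" using sum_nz[OF ab ab'] x y by simp
  have P: "ppt (lincomb 1 x 0 y) \<in> spanS c (line_pts u1 v1 \<union> line_pts u2 v2)"
    using line_ptsI[OF ab, of u1 v1] x by (auto simp: lc10 intro: spanS.base)
  have Q: "ppt (lincomb 0 x 1 y) \<in> spanS c (line_pts u1 v1 \<union> line_pts u2 v2)"
    using line_ptsI[OF ab', of u2 v2] y by (auto simp: lc01 intro: spanS.base)
  have Rs: "ppt (lincomb 1 x 1 y) \<in> surf_pts c" by (rule surfI[OF Rnz R0])
  have Fm: "evalF c (lincomb 1 x (-1) y) = - (cf c x y 2 + cf c x y 2)"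
    using cf_vals(4)[of c x y, symmetric] c3 c0 c1 by simp
  have "cf c x y 2 + cf c x y 2 \<noteq> 0" using two ne by (simp add: mult_2[symmetric])
  then have nl: "\<not> (line_pts (ext_vec x) (ext_vec y) \<subseteq> surf_pts (ext_coeffs c))"
    using Fm by (intro not_line_in[where s=1 and t="-1"]) simp
  have idt: "\<forall>s t :: 'k alg_closure.
           evalF (ext_coeffs c) (lincomb s (ext_vec x) t (ext_vec y)) =
             to_ac (- cf c x y 2) * (to_ac 0 * s - to_ac 1 * t) * (to_ac 1 * s - to_ac 0 * t)
               * (to_ac 1 * s - to_ac 1 * t)"
    using binL[OF two] c3 c0 c1 by (simp add: algebra_simps power2_eq_square power3_eq_cube)
  have T: "third_pt c (ppt (lincomb 1 x 0 y)) (ppt (lincomb 0 x 1 y)) (ppt (lincomb 1 x 1 y))"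
    by (rule third_ptI[OF ind nl _ _ _ _ idt]) (use ne in auto)
  show ?thesis by (rule spanS.step[OF P Q Rs T])
qed


lemma D_lin: "cf c (lincomb p w q z) r 1 = p * cf c w r 1 + q * cf c z r 1"
  unfolding coeff1_bP by (simp add: lincomb_def sum.distrib sum_distrib_left algebra_simps)

lemma D_comb4: "cf c (comb4 w1 w2 w3 w4 a b c' d) r 1 =
    a * cf c w1 r 1 + b * cf c w2 r 1 + c' * cf c w3 r 1 + d * cf c w4 r 1"
  unfolding coeff1_bP by (simp add: comb4_def sum.distrib sum_distrib_left algebra_simps)

lemma D_delta: "cf c (\<lambda>i. if i = j then 1 else 0) r 1 = pdF c j r"
proof -
  have "(\<Sum>i\<in>UNIV. (if i = j then 1 else 0) * pdF c i r) = (\<Sum>i\<in>UNIV. if i = j then pdF c i r else 0)"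
    by (rule sum.cong) auto
  then show ?thesis unfolding coeff1_bP by simp
qed

lemma pick_pq:
  fixes a b al be :: "'a::field"
  assumes ab: "(a,b) \<noteq> (0,0)" and ne: "(al, be) \<noteq> (0,0)"
  shows "\<exists>p q. a*q - b*p \<noteq> 0 \<and> p*al + q*be \<noteq> 0"
proof (cases "a*al + b*be = 0")
  case False
  show ?thesis
    by (rule exI[of _ "a - be"], rule exI[of _ "b + al"]) (use False in \<open>simp add: algebra_simps\<close>)
next
  case True
  show ?thesis
  proof (cases "al = 0")
    case False
    have "b \<noteq> 0" using True False ab by auto
    then show ?thesis using False by (intro exI[of _ 1] exI[of _ 0]) simp
  next
    case al: True
    then have "be \<noteq> 0" using ne by auto
    then have "a \<noteq> 0" using True al ab by auto
    then show ?thesis using \<open>be \<noteq> 0\<close> by (intro exI[of _ 0] exI[of _ 1]) simp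
  qed
qed


lemma comb4_inj_cl:
  fixes a b c' d a' b' c'' d' :: "'k alg_closure"
  assumes "comb4 (ext_vec u1) (ext_vec v1) (ext_vec u2) (ext_vec v2) a b c' d =
           comb4 (ext_vec u1) (ext_vec v1) (ext_vec u2) (ext_vec v2) a' b' c'' d'"
  shows "a = a' \<and> b = b' \<and> c' = c'' \<and> d = d'"
  using indep4_cl[OF assms[unfolded comb4_diff]] by simp

lemma no_two_lines:
  assumes ab: "(a,b) \<noteq> (0,0)" and x: "x = lincomb a u1 b v1"
    and x': "x' = lincomb p u1 q v1" and det: "a*q - b*p \<noteq> 0"
    and ab': "(a',b') \<noteq> (0,0)" and y: "y = lincomb a' u2 b' v2" and k: "k \<noteq> 0"
    and L: "\<forall>s t. evalF c (lincomb s x t y) = 0"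
    and L': "\<forall>s t. evalF c (lincomb s x' t (\<lambda>i. k * y i)) = 0"
  shows False
proof -
  have pq: "(p, q) \<noteq> (0, 0)" using det by auto
  have ky: "(\<lambda>i. k * y i) = lincomb (k*a') u2 (k*b') v2" using y by (simp add: lincomb_def fun_eq_iff algebra_simps)
  have kab: "(k*a', k*b') \<noteq> (0,0)" using k ab' by auto
  have ixy: "indep2 x y" using indep_xy[OF ab ab'] x y by simp
  have ixy': "indep2 x' (\<lambda>i. k * y i)" using indep_xy[OF pq kab] x' ky by simp
  let ?ly = "line_pts (ext_vec u2) (ext_vec v2)"
  let ?lx = "line_pts (ext_vec x) (ext_vec y)"
  let ?lx' = "line_pts (ext_vec x') (ext_vec (\<lambda>i. k * y i))"
  have sly: "line_on_surface (ext_coeffs c) ?ly"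
    unfolding line_on_surface_def is_line_def using ext_indep2[OF ind2] l2
    unfolding Kline_on_surface_def by blast
  have slx: "line_on_surface (ext_coeffs c) ?lx" by (rule line_on_surfI[OF two ixy L])
  have slx': "line_on_surface (ext_coeffs c) ?lx'" by (rule line_on_surfI[OF two ixy' L'])
  have ynz: "y \<noteq> (\<lambda>_. 0)" using ixy unfolding indep2_def lincomb_def
    by (metis (no_types, lifting) mult_zero_left add_0 mult_1 zero_neq_one)
  have Ys: "ppt (ext_vec y) \<in> surf_pts (ext_coeffs c)"
  proof (rule surfI)
    show "ext_vec y \<noteq> (\<lambda>_. 0)" using ynz ext_vec_0_iff by blast
    show "evalF (ext_coeffs c) (ext_vec y) = 0" using F_l2 y by (simp add: evalF_ext)
  qed
  have y_ly: "ppt (ext_vec y) \<in> ?ly"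
  proof -
    have "ext_vec y = lincomb (to_ac a') (ext_vec u2) (to_ac b') (ext_vec v2)" using y by (simp add: ext_lincomb)
    moreover have "(to_ac a', to_ac b') \<noteq> (0,0)" using ab' by simp
    ultimately show ?thesis using line_ptsI by metis
  qed
  have y_lx: "ppt (ext_vec y) \<in> ?lx"
    using line_ptsI[of 0 1 "ext_vec x" "ext_vec y"] by (simp add: lc01)
  have y_lx': "ppt (ext_vec y) \<in> ?lx'"
  proof -
    have "ext_vec y = lincomb 0 (ext_vec x') (inverse (to_ac k)) (ext_vec (\<lambda>i. k * y i))"
      using k by (simp add: lincomb_def ext_vec_def fun_eq_iff)
    moreover have "(0, inverse (to_ac k)) \<noteq> (0,0)" using k by simp
    ultimately show ?thesis using line_ptsI by metis
  qed
  have x1: "ppt (ext_vec x) \<in> line_pts (ext_vec u1) (ext_vec v1)"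
  proof -
    have "ext_vec x = lincomb (to_ac a) (ext_vec u1) (to_ac b) (ext_vec v1)" using x by (simp add: ext_lincomb)
    moreover have "(to_ac a, to_ac b) \<noteq> (0,0)" using ab by simp
    ultimately show ?thesis using line_ptsI by metis
  qed
  have x1': "ppt (ext_vec x') \<in> line_pts (ext_vec u1) (ext_vec v1)"
  proof -
    have "ext_vec x' = lincomb (to_ac p) (ext_vec u1) (to_ac q) (ext_vec v1)" using x' by (simp add: ext_lincomb)
    moreover have "(to_ac p, to_ac q) \<noteq> (0,0)" using pq by simp
    ultimately show ?thesis using line_ptsI by metis
  qed
  have x_lx: "ppt (ext_vec x) \<in> ?lx"
    using line_ptsI[of 1 0 "ext_vec x" "ext_vec y"] by (simp add: lc10)
  have x'_lx': "ppt (ext_vec x') \<in> ?lx'"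
    using line_ptsI[of 1 0 "ext_vec x'" "ext_vec (\<lambda>i. k * y i)"] by (simp add: lc10)
  have d1: "?ly \<noteq> ?lx" using x_lx x1 skew by blast
  have d2: "?ly \<noteq> ?lx'" using x'_lx' x1' skew by blast
  have d3: "?lx \<noteq> ?lx'"
  proof
    assume eq: "?lx = ?lx'"
    then have "ppt (ext_vec x') \<in> ?lx" using x'_lx' by simp
    then obtain s t where st: "ppt (ext_vec x') = ppt (lincomb s (ext_vec x) t (ext_vec y))"
      unfolding line_pts_def by auto
    then obtain al where al: "ext_vec x' = (\<lambda>i. al * lincomb s (ext_vec x) t (ext_vec y) i)"
      using ppt_eqD by blast
    have "comb4 (ext_vec u1) (ext_vec v1) (ext_vec u2) (ext_vec v2) (to_ac p) (to_ac q) 0 0 =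
          comb4 (ext_vec u1) (ext_vec v1) (ext_vec u2) (ext_vec v2) (al*s*to_ac a) (al*s*to_ac b) (al*t*to_ac a') (al*t*to_ac b')"
      using al x x' y by (simp add: comb4_def lincomb_def ext_vec_def fun_eq_iff algebra_simps)
    then have "to_ac p = al*s*to_ac a \<and> to_ac q = al*s*to_ac b" using comb4_inj_cl by blast
    then have "to_ac (a*q - b*p) = 0" by (simp add: algebra_simps)
    then have "a*q - b*p = 0" by (simp only: to_ac_eq_0_iff)
    then show False using det by simp
  qed
  have "Kline_has_K_eckardt c u2 v2"
    unfolding Kline_has_K_eckardt_def
  proof (rule exI[of _ y], intro conjI)
    show "ppt y \<in> line_pts u2 v2" using y line_ptsI[OF ab'] by simp
    show "eckardt (ext_coeffs c) (ppt (ext_vec y))"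
      unfolding eckardt_def using Ys sly slx slx' y_ly y_lx y_lx' d1 d2 d3 by blast
  qed
  then show False using ne2 by simp
qed

lemma hard:
  assumes ab: "(a,b) \<noteq> (0,0)" and ab': "(a',b') \<noteq> (0,0)"
    and x: "x = lincomb a u1 b v1" and y: "y = lincomb a' u2 b' v2"
    and r: "r = lincomb 1 x 1 y"
    and inS: "\<forall>s t. evalF c (lincomb s x t y) = 0"
    and D: "(cf c u1 r 1, cf c v1 r 1) \<noteq> (0, 0)"
  shows "ppt r \<in> spanS c (line_pts u1 v1 \<union> line_pts u2 v2)"
proof -
  obtain p q where det: "a*q - b*p \<noteq> 0" and e1nz': "p * cf c u1 r 1 + q * cf c v1 r 1 \<noteq> 0"
    using pick_pq[OF ab D] by blast
  define x' where "x' = lincomb p u1 q v1"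
  define e1 where "e1 = cf c x' r 1"
  define e2 where "e2 = cf c x' r 2"
  have e1nz: "e1 \<noteq> 0" using e1nz' unfolding e1_def x'_def D_lin .
  have pq: "(p, q) \<noteq> (0, 0)" using det by auto
  have Fx': "evalF c x' = 0" using F_l1 x'_def by simp
  have Fr: "evalF c r = 0" using inS r by simp
  have c3: "cf c x' r 3 = 0" using cf_vals(1)[of c x' r] Fx' by (simp add: lc10)
  have c0: "cf c x' r 0 = 0" using cf_vals(2)[of c x' r] Fr by (simp add: lc01)
  have lcx'r: "lincomb s x' t r = comb4 u1 v1 u2 v2 (s*p + t*a) (s*q + t*b) (t*a') (t*b')" for s t
    unfolding x'_def r x y lincomb_def comb4_def by (rule ext) (simp add: algebra_simps)
  have ind: "indep2 x' r"
    unfolding indep2_def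
  proof (intro allI impI)
    fix s t assume "lincomb s x' t r = (\<lambda>_. 0)"
    then have h: "s*p + t*a = 0 \<and> s*q + t*b = 0 \<and> t*a' = 0 \<and> t*b' = 0"
      unfolding lcx'r by (rule indep4)
    then have "t = 0" using ab' by auto
    then show "s = 0 \<and> t = 0" using h pq by auto
  qed
  have rnz: "r \<noteq> (\<lambda>_. 0)" using sum_nz[OF ab ab'] r x y by simp
  have Rs: "ppt (lincomb 0 x' 1 r) \<in> surf_pts c" using surfI[OF rnz Fr] by (simp add: lc01)
  have P: "ppt (lincomb 1 x' 0 r) \<in> spanS c (line_pts u1 v1 \<union> line_pts u2 v2)"
    using line_ptsI[OF pq, of u1 v1] x'_def by (auto simp: lc10 intro: spanS.base)
  have "ppt (lincomb 0 x' 1 r) \<in> spanS c (line_pts u1 v1 \<union> line_pts u2 v2)"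
  proof (cases "e2 = 0")
    case True
    have nl: "\<not> (line_pts (ext_vec x') (ext_vec r) \<subseteq> surf_pts (ext_coeffs c))"
      using cf_vals(3)[of c x' r, symmetric] c3 c0 True e1nz unfolding e1_def e2_def
      by (intro not_line_in[where s=1 and t=1]) simp
    have idt: "\<forall>s t :: 'k alg_closure.
           evalF (ext_coeffs c) (lincomb s (ext_vec x') t (ext_vec r)) =
             to_ac e1 * (to_ac 0 * s - to_ac 1 * t) * (to_ac 0 * s - to_ac 1 * t)
               * (to_ac 1 * s - to_ac 0 * t)"
      using binL[OF two] c3 c0 True unfolding e1_def e2_def
      by (simp add: algebra_simps power2_eq_square power3_eq_cube)
    have T: "third_pt c (ppt (lincomb 1 x' 0 r)) (ppt (lincomb 1 x' 0 r)) (ppt (lincomb 0 x' 1 r))"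
      by (rule third_ptI[OF ind nl _ _ _ _ idt]) (use e1nz in auto)
    show ?thesis by (rule spanS.step[OF P P Rs T])
  next
    case False
    define xw where "xw = lincomb (e1*p - e2*a) u1 (e1*q - e2*b) v1"
    define yw where "yw = lincomb (-e2*a') u2 (-e2*b') v2"
    have Weq: "lincomb e1 x' (-e2) r = lincomb 1 xw 1 yw"
      unfolding x'_def r x y xw_def yw_def lincomb_def by (rule ext) (simp add: algebra_simps)
    have FW: "evalF c (lincomb 1 xw 1 yw) = 0"
    proof -
      have "evalF c (lincomb e1 x' (-e2) r) = 0"
        using c3 c0 unfolding binform e1_def[symmetric] e2_def[symmetric]
        by (simp add: algebra_simps power2_eq_square power3_eq_cube)
      then show ?thesis using Weq by simp
    qed
    have xwnz: "(e1*p - e2*a, e1*q - e2*b) \<noteq> (0,0)"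
    proof
      assume h: "(e1*p - e2*a, e1*q - e2*b) = (0,0)"
      have "a*(e1*q - e2*b) - b*(e1*p - e2*a) = e1 * (a*q - b*p)" by (simp add: algebra_simps)
      then have "e1 * (a*q - b*p) = 0" using h by simp
      then show False using e1nz det by simp
    qed
    have ywnz: "(-e2*a', -e2*b') \<noteq> (0,0)" using False ab' by auto
    have Wsp: "ppt (lincomb e1 x' (-e2) r) \<in> spanS c (line_pts u1 v1 \<union> line_pts u2 v2)"
    proof (cases "cf c xw yw 2 = 0")
      case False
      show ?thesis unfolding Weq by (rule easy[OF xwnz ywnz xw_def yw_def FW False])
    next
      case True
      have w3: "cf c xw yw 3 = 0" using cf_vals(1)[of c xw yw] xw_def F_l1 by (simp add: lc10)
      have w0: "cf c xw yw 0 = 0" using cf_vals(2)[of c xw yw] yw_def F_l2 by (simp add: lc01)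
      have w1: "cf c xw yw 1 = 0" using cf_vals(3)[of c xw yw] FW w3 w0 True by simp
      have inSW: "\<forall>s t. evalF c (lincomb s xw t yw) = 0"
        using w3 w0 w1 True by (simp add: binform)
      have ywk: "yw = (\<lambda>i. (-e2) * y i)" unfolding yw_def y lincomb_def by (rule ext) (simp add: algebra_simps)
      have detw: "a*(e1*q - e2*b) - b*(e1*p - e2*a) \<noteq> 0"
      proof -
        have "a*(e1*q - e2*b) - b*(e1*p - e2*a) = e1 * (a*q - b*p)" by (simp add: algebra_simps)
        then show ?thesis using e1nz det by simp
      qed
      have "False"
        by (rule no_two_lines[where k="-e2", OF ab x xw_def detw ab' y _ inS]) (use False inSW ywk in auto)
      then show ?thesis ..
    qed
    have nl: "\<not> (line_pts (ext_vec x') (ext_vec r) \<subseteq> surf_pts (ext_coeffs c))"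
    proof (cases "evalF c (lincomb 1 x' 1 r) = 0")
      case True
      have "evalF c (lincomb 1 x' (-1) r) \<noteq> 0"
      proof
        assume h: "evalF c (lincomb 1 x' (-1) r) = 0"
        have "e2 + e1 = 0" using True cf_vals(3)[of c x' r] c3 c0 unfolding e1_def e2_def by simp
        moreover have "e1 - e2 = 0" using h cf_vals(4)[of c x' r] c3 c0 unfolding e1_def e2_def by (simp add: algebra_simps)
        ultimately have "(e2 + e1) + (e1 - e2) = 0" by simp
        then have "2 * e1 = 0" by (simp add: mult_2 algebra_simps)
        then show False using two e1nz by simp
      qed
      then show ?thesis by (rule not_line_in)
    next
      case False
      then show ?thesis by (rule not_line_in)
    qed
    have idt: "\<forall>s t :: 'k alg_closure.
           evalF (ext_coeffs c) (lincomb s (ext_vec x') t (ext_vec r)) =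
             to_ac 1 * (to_ac 0 * s - to_ac 1 * t) * (to_ac (-e2) * s - to_ac e1 * t)
               * (to_ac 1 * s - to_ac 0 * t)"
      using binL[OF two, where c=c and x=x' and y=r] c3 c0
      by (simp add: e1_def e2_def algebra_simps power2_eq_square power3_eq_cube)
    have T: "third_pt c (ppt (lincomb 1 x' 0 r)) (ppt (lincomb e1 x' (-e2) r)) (ppt (lincomb 0 x' 1 r))"
      by (rule third_ptI[OF ind nl _ _ _ _ idt]) (use e1nz in auto)
    show ?thesis by (rule spanS.step[OF P Wsp Rs T])
  qed
  then show ?thesis by (simp add: lc01)
qed


lemma span_sub: "P \<in> spanS c (line_pts u1 v1 \<union> line_pts u2 v2) \<Longrightarrow> P \<in> surf_pts c"
proof (induction rule: spanS.induct)
  case (base R)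
  then show ?case
  proof
    assume "R \<in> line_pts u1 v1"
    then obtain s t where st: "(s,t) \<noteq> (0,0)" "R = ppt (lincomb s u1 t v1)" unfolding line_pts_def by auto
    have "lincomb s u1 t v1 \<noteq> (\<lambda>_. 0)" using ind1 st(1) unfolding indep2_def by blast
    then show ?thesis using st(2) F_l1 surfI by metis
  next
    assume "R \<in> line_pts u2 v2"
    then obtain s t where st: "(s,t) \<noteq> (0,0)" "R = ppt (lincomb s u2 t v2)" unfolding line_pts_def by auto
    have "lincomb s u2 t v2 \<noteq> (\<lambda>_. 0)" using ind2 st(1) unfolding indep2_def by blast
    then show ?thesis using st(2) F_l2 surfI by metis
  qed
qed simp

lemma point_span:
  assumes "P \<in> surf_pts c"
  shows "P \<in> spanS c (line_pts u1 v1 \<union> line_pts u2 v2)"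
proof -
  have skew': "line_pts (ext_vec u2) (ext_vec v2) \<inter> line_pts (ext_vec u1) (ext_vec v1) = {}"
    using skew by (simp add: Int_commute)
  interpret sw: cs c u2 v2 u1 v1 by (rule cs.intro[OF card smooth l2 l1 skew' ne2 ne1])
  obtain z where z: "P = ppt z" "z \<noteq> (\<lambda>_. 0)" "evalF c z = 0" using assms unfolding surf_pts_def by auto
  obtain a b a' b' where zc: "z = comb4 u1 v1 u2 v2 a b a' b'" using surj4 by blast
  show ?thesis
  proof (cases "(a', b') = (0, 0)")
    case True
    then have "z = lincomb a u1 b v1" using zc by (simp add: comb4_def lincomb_def)
    moreover have "(a, b) \<noteq> (0,0)" using True zc z(2) by (auto simp: comb4_def)
    ultimately have "P \<in> line_pts u1 v1" using z(1) line_ptsI by simp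
    then show ?thesis by (intro spanS.base UnI1)
  next
    case ab': False
    show ?thesis
    proof (cases "(a, b) = (0, 0)")
      case True
      then have "z = lincomb a' u2 b' v2" using zc by (simp add: comb4_def lincomb_def)
      then have "P \<in> line_pts u2 v2" using z(1) ab' line_ptsI by simp
      then show ?thesis by (intro spanS.base UnI2)
    next
      case ab: False
      define x where "x = lincomb a u1 b v1"
      define y where "y = lincomb a' u2 b' v2"
      have zxy: "z = lincomb 1 x 1 y" using zc unfolding x_def y_def by (simp add: comb4_lincomb)
      have R0: "evalF c (lincomb 1 x 1 y) = 0" using z(3) zxy by simp
      show ?thesis
      proof (cases "cf c x y 2 = 0")
        case False
        show ?thesis using easy[OF ab ab' x_def y_def R0 False] z(1) zxy by simp
      next
        case True
        have w3: "cf c x y 3 = 0" using cf_vals(1)[of c x y] x_def F_l1 by (simp add: lc10)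
        have w0: "cf c x y 0 = 0" using cf_vals(2)[of c x y] y_def F_l2 by (simp add: lc01)
        have w1: "cf c x y 1 = 0" using cf_vals(3)[of c x y] R0 w3 w0 True by simp
        have inS: "\<forall>s t. evalF c (lincomb s x t y) = 0"
          using w3 w0 w1 True by (simp add: binform)
        have "ext_vec z \<noteq> (\<lambda>_. 0)" using z(2) ext_vec_0_iff by blast
        moreover have "evalF (ext_coeffs c) (ext_vec z) = 0" using z(3) by (simp add: evalF_ext)
        ultimately obtain j where "pdF (ext_coeffs c) j (ext_vec z) \<noteq> 0"
          using smooth unfolding smooth_cubic_def by blast
        then have pj: "pdF c j z \<noteq> 0" by (simp add: pdF_ext)
        have "(cf c u1 z 1, cf c v1 z 1) \<noteq> (0, 0) \<or> (cf c u2 z 1, cf c v2 z 1) \<noteq> (0, 0)"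
        proof (rule ccontr)
          assume "\<not> ?thesis"
          then have h: "cf c u1 z 1 = 0" "cf c v1 z 1 = 0" "cf c u2 z 1 = 0" "cf c v2 z 1 = 0" by auto
          obtain al be ga de where "(\<lambda>i. if i = j then (1::'k) else 0) = comb4 u1 v1 u2 v2 al be ga de"
            using surj4 by blast
          then have "pdF c j z = cf c (comb4 u1 v1 u2 v2 al be ga de) z 1" using D_delta by metis
          also have "\<dots> = 0" unfolding D_comb4 h by simp
          finally show False using pj by simp
        qed
        then show ?thesis
        proof
          assume D: "(cf c u1 z 1, cf c v1 z 1) \<noteq> (0, 0)"
          show ?thesis using hard[OF ab ab' x_def y_def zxy inS D] z(1) by simp
        next
          assume D: "(cf c u2 z 1, cf c v2 z 1) \<noteq> (0, 0)"
          have zyx: "z = lincomb 1 y 1 x" using zxy by (simp add: lincomb_def fun_eq_iff add.commute)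
          have inS': "\<forall>s t. evalF c (lincomb s y t x) = 0"
          proof (intro allI)
            fix s t
            have "lincomb s y t x = lincomb t x s y" by (simp add: lincomb_def fun_eq_iff add.commute)
            then show "evalF c (lincomb s y t x) = 0" using inS by simp
          qed
          have "ppt z \<in> spanS c (line_pts u2 v2 \<union> line_pts u1 v1)"
            by (rule sw.hard[OF ab' ab y_def x_def zyx inS' D])
          then show ?thesis using z(1) by (simp add: Un_commute)
        qed
      qed
    qed
  qed
qed

end

theorem mainTheorem15:
  fixes c :: "(4 \<Rightarrow> nat) \<Rightarrow> 'k::{field, finite}"
    and u1 v1 u2 v2 :: "4 \<Rightarrow> 'k"
  assumes "CARD('k) = 3"
    and "smooth_cubic c"
    and "Kline_on_surface c u1 v1"
    and "Kline_on_surface c u2 v2"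
    and "line_pts (ext_vec u1) (ext_vec v1) \<inter> line_pts (ext_vec u2) (ext_vec v2) = {}"
    and "\<not> Kline_has_K_eckardt c u1 v1"
    and "\<not> Kline_has_K_eckardt c u2 v2"
  shows "spanS c (line_pts u1 v1 \<union> line_pts u2 v2) = surf_pts c"
proof -
  interpret cs c u1 v1 u2 v2 by (rule cs.intro[OF assms])
  show ?thesis using span_sub point_span by blast
qed


end
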